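(* Let $p$ be an odd prime and let $\alpha$ be a root of $H_p(X,1)$. For a positive integer $M$ let $\zeta_M$ denote a primitive $M$-th root of unity. Then $\mathbb{Q}(\alpha)=\mathbb{Q}(\zeta_{4p}+\zeta_{4p}^{-1})$ (inside $\mathbb{C}$, with $\zeta_{4p}=e^{2\pi i/(4p)}$); in particular $[\mathbb{Q}(\alpha):\mathbb{Q}]=p-1$, and $\mathbb{Q}(\zeta_p+\zeta_p^{-1})\subset\mathbb{Q}(\alpha)$ for $\zeta_p=\zeta_{4p}^4$.
   Context: For an odd prime $p$ put $\delta_4=1$ if $p\equiv 1\pmod 4$, $\delta_4=-1$ if $p\equiv 3\pmod 4$. Let $G_p(u,v)=\mathrm{Im}\big((1+i)(u+iv)^p\big)\in\mathbb{Z}[u,v]$ (for real $u,v$); $u+\delta_4 v$ divides $G_p$ in $\mathbb{Z}[u,v]$, and $H_p(u,v):=G_p(u,v)/(u+\delta_4 v)\in\mathbb{Z}[u,v]$. The roots of $H_p(X,1)$ are the $p-1$ real numbers $\tan\frac{(4j+3)\pi}{4p}$, $j\in\{0,\dots,p-1\}$, different from $-\delta_4$. *)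

theory Defs
  imports Complex_Main "HOL-Computational_Algebra.Polynomial"
begin

definition delta4 :: "nat \<Rightarrow> real" where
  "delta4 p = (if p mod 4 = 1 then 1 else -1)"

text \<open>G_p(X,1) = Im((1+i)(X+i)^p), as a real polynomial in X (for real X,
  Im is linear, so taking Im of the coefficients is the same).\<close>
definition Gp1 :: "nat \<Rightarrow> real poly" where
  "Gp1 p = map_poly Im (smult (1 + \<i>) ([:\<i>, 1:] ^ p))"

definition Hp1 :: "nat \<Rightarrow> real poly" where
  "Hp1 p = Gp1 p div [:delta4 p, 1:]"

definition subfield_C :: "complex set \<Rightarrow> bool" where
  "subfield_C K \<longleftrightarrow> 0 \<in> K \<and> 1 \<in> K \<and>
     (\<forall>x\<in>K. \<forall>y\<in>K. x + y \<in> K \<and> x - y \<in> K \<and> x * y \<in> K) \<and>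
     (\<forall>x\<in>K. x \<noteq> 0 \<longrightarrow> inverse x \<in> K)"

definition Qadj :: "complex set \<Rightarrow> complex set" where
  "Qadj S = \<Inter>{K. subfield_C K \<and> S \<subseteq> K}"

definition Q_basis :: "complex set \<Rightarrow> complex set \<Rightarrow> bool" where
  "Q_basis K B \<longleftrightarrow> finite B \<and> B \<subseteq> K \<and>
     (\<forall>c :: complex \<Rightarrow> rat. (\<Sum>b\<in>B. of_rat (c b) * b) = 0 \<longrightarrow> (\<forall>b\<in>B. c b = 0)) \<and>
     (\<forall>x\<in>K. \<exists>c :: complex \<Rightarrow> rat. x = (\<Sum>b\<in>B. of_rat (c b) * b))"

definition Q_degree_eq :: "complex set \<Rightarrow> nat \<Rightarrow> bool" where
  "Q_degree_eq K n \<longleftrightarrow> (\<exists>B. Q_basis K B \<and> card B = n)"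

end

theory Submission
  imports Defs "Berlekamp_Zassenhaus.Factor_Bound"
begin


lemma subfield_Qadj: "subfield_C (Qadj S)"
  unfolding subfield_C_def Qadj_def by auto

lemma Qadj_sub: "S \<subseteq> Qadj S"
  unfolding Qadj_def by auto

lemma Qadj_least: "subfield_C K \<Longrightarrow> S \<subseteq> K \<Longrightarrow> Qadj S \<subseteq> K"
  unfolding Qadj_def by auto

lemma sf_add: "subfield_C K \<Longrightarrow> x \<in> K \<Longrightarrow> y \<in> K \<Longrightarrow> x + y \<in> K"
  and sf_diff: "subfield_C K \<Longrightarrow> x \<in> K \<Longrightarrow> y \<in> K \<Longrightarrow> x - y \<in> K"
  and sf_mult: "subfield_C K \<Longrightarrow> x \<in> K \<Longrightarrow> y \<in> K \<Longrightarrow> x * y \<in> K"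
  and sf_0: "subfield_C K \<Longrightarrow> 0 \<in> K"
  and sf_1: "subfield_C K \<Longrightarrow> 1 \<in> K"
  unfolding subfield_C_def by auto

lemma sf_inverse: "subfield_C K \<Longrightarrow> x \<in> K \<Longrightarrow> inverse x \<in> K"
  unfolding subfield_C_def by (cases "x = 0") auto

lemma sf_divide: "subfield_C K \<Longrightarrow> x \<in> K \<Longrightarrow> y \<in> K \<Longrightarrow> x / y \<in> K"
  by (simp add: divide_inverse sf_mult sf_inverse)

lemma sf_uminus: "subfield_C K \<Longrightarrow> x \<in> K \<Longrightarrow> - x \<in> K"
  using sf_diff[of K 0 x] sf_0[of K] by simp

lemma sf_power: "subfield_C K \<Longrightarrow> x \<in> K \<Longrightarrow> x ^ n \<in> K"
  by (induction n) (auto intro: sf_mult sf_1)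

lemma sf_of_nat: "subfield_C K \<Longrightarrow> of_nat n \<in> K"
  by (induction n) (auto intro: sf_add sf_1 sf_0)

lemma sf_of_int: "subfield_C K \<Longrightarrow> of_int n \<in> K"
proof (cases "n \<ge> 0")
  case True
  assume K: "subfield_C K"
  then show ?thesis using True sf_of_nat[OF K, of "nat n"] by simp
next
  case False
  assume K: "subfield_C K"
  then show ?thesis using False sf_uminus[OF K sf_of_nat[OF K, of "nat (-n)"]] by simp
qed

lemma sf_of_rat: "subfield_C K \<Longrightarrow> (of_rat r :: complex) \<in> K"
proof -
  assume K: "subfield_C K"
  obtain a b where r: "r = Rat.Fract a b" and "b > 0" by (cases r) auto
  have "(of_rat r :: complex) = of_int a / of_int b" using r \<open>b > 0\<close> by (simp add: of_rat_rat)
  then show ?thesis using sf_divide[OF K sf_of_int[OF K] sf_of_int[OF K]] by simp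
qed

lemma sf_rpoly: "subfield_C K \<Longrightarrow> z \<in> K \<Longrightarrow> poly (map_poly (of_rat :: rat \<Rightarrow> complex) q) z \<in> K"
proof (induction q)
  case 0
  then show ?case by (simp add: sf_0)
next
  case (pCons a q)
  then show ?case by (simp add: map_poly_pCons sf_add sf_mult sf_of_rat)
qed

lemma Qadj_elem: "x \<in> Qadj T \<Longrightarrow> Qadj {x} \<subseteq> Qadj T"
  using Qadj_least subfield_Qadj by blast



lemma rp_mult: "map_poly (of_rat :: rat \<Rightarrow> complex) (a * b) = map_poly of_rat a * map_poly of_rat b"
proof (induction a)
  case 0 then show ?case by simp
next
  case (pCons c a)
  have "map_poly (of_rat :: rat \<Rightarrow> complex) (pCons c a * b) = map_poly of_rat (Polynomial.smult c b + pCons 0 (a * b))"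
    by simp
  also have "\<dots> = Polynomial.smult (of_rat c) (map_poly of_rat b) + pCons 0 (map_poly of_rat (a * b))"
    by (simp add: of_rat_hom.map_poly_hom_add of_rat_hom.map_poly_pCons_hom of_rat_hom.map_poly_hom_smult)
  also have "\<dots> = map_poly of_rat (pCons c a) * map_poly of_rat b"
    using pCons by (simp add: map_poly_pCons)
  finally show ?case .
qed

lemma rpoly_mult: "poly (map_poly (of_rat :: rat \<Rightarrow> complex) (a * b)) z = poly (map_poly of_rat a) z * poly (map_poly of_rat b) z"
  by (simp add: rp_mult)

lemma rpoly_add: "poly (map_poly (of_rat :: rat \<Rightarrow> complex) (a + b)) z = poly (map_poly of_rat a) z + poly (map_poly of_rat b) z"
  by (simp add: of_rat_hom.map_poly_hom_add)

lemma rpoly_const: "poly (map_poly (of_rat :: rat \<Rightarrow> complex) [:c:]) z = of_rat c"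
  by (cases "c = 0") (simp_all add: map_poly_pCons)

lemma minpoly_root_deg:
  fixes M q :: "rat poly" and \<gamma> :: complex
  assumes root: "poly (map_poly of_rat M) \<gamma> = 0"
    and irr: "\<And>g h. M = g * h \<Longrightarrow> degree g = 0 \<or> degree h = 0"
    and M0: "M \<noteq> 0"
    and q0: "q \<noteq> 0" and qr: "poly (map_poly of_rat q) \<gamma> = 0"
  shows "degree M \<le> degree q"
proof -
  define d where "d = gcd q M"
  have bz: "fst (bezout_coefficients q M) * q + snd (bezout_coefficients q M) * M = d"
    unfolding d_def by (rule bezout_coefficients_fst_snd)
  have dr: "poly (map_poly of_rat d) \<gamma> = 0"
    unfolding bz[symmetric] rpoly_add rpoly_mult root qr by simp
  have "d dvd M" unfolding d_def by simp
  then obtain e where Me: "M = d * e" by (elim dvdE)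
  have d0: "d \<noteq> 0" using q0 d_def by simp
  have "degree d \<noteq> 0"
  proof
    assume "degree d = 0"
    then obtain c where "d = [:c:]" by (metis degree_eq_zeroE)
    then show False using dr d0 by simp
  qed
  then have "degree e = 0" using irr[OF Me] by simp
  then have "degree M = degree d" using Me M0 by (simp add: degree_mult_eq)
  moreover have "d dvd q" unfolding d_def by simp
  then have "degree d \<le> degree q" using q0 by (simp add: dvd_imp_degree_le)
  ultimately show ?thesis by simp
qed



lemma rp_sum_monom: "poly (map_poly (of_rat :: rat \<Rightarrow> complex) (\<Sum>i<k. Polynomial.monom (f i) i)) z = (\<Sum>i<k. of_rat (f i) * z ^ i)"
proof (induction k)
  case 0 then show ?case by simp
next
  case (Suc k)
  then show ?case by (simp add: rpoly_add map_poly_monom poly_monom)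
qed

lemma rp_monom: "poly (map_poly (of_rat :: rat \<Rightarrow> complex) (Polynomial.monom c k)) z = of_rat c * z ^ k"
  by (simp add: map_poly_monom poly_monom)

lemma rpoly_diff: "poly (map_poly (of_rat :: rat \<Rightarrow> complex) (a - b)) z = poly (map_poly of_rat a) z - poly (map_poly of_rat b) z"
  using rpoly_add[of "a - b" b z] by simp

lemma minpoly_field:
  fixes M :: "rat poly" and \<gamma> :: complex
  assumes root: "poly (map_poly of_rat M) \<gamma> = 0"
    and irr: "\<And>g h. M = g * h \<Longrightarrow> degree g = 0 \<or> degree h = 0"
    and M0: "M \<noteq> 0"
  shows "Qadj {\<gamma>} = {poly (map_poly of_rat q) \<gamma> | q. True}"
proof -
  let ?F = "{poly (map_poly (of_rat :: rat \<Rightarrow> complex) q) \<gamma> | q. True}"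
  have sf: "subfield_C ?F"
    unfolding subfield_C_def
  proof (intro conjI ballI impI)
    show "0 \<in> ?F" by (rule CollectI, rule exI[of _ 0]) simp
    show "1 \<in> ?F" by (rule CollectI, rule exI[of _ 1]) simp
    fix x y assume "x \<in> ?F" "y \<in> ?F"
    then obtain a b where x: "x = poly (map_poly of_rat a) \<gamma>" and y: "y = poly (map_poly of_rat b) \<gamma>" by auto
    show "x + y \<in> ?F" by (rule CollectI, rule exI[of _ "a + b"]) (simp add: x y rpoly_add)
    show "x * y \<in> ?F" by (rule CollectI, rule exI[of _ "a * b"]) (simp add: x y rpoly_mult)
    show "x - y \<in> ?F" by (rule CollectI, rule exI[of _ "a - b"]) (simp add: x y rpoly_diff)
  next
    fix x assume "x \<in> ?F" and x0: "x \<noteq> 0"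
    then obtain q where x: "x = poly (map_poly of_rat q) \<gamma>" by auto
    define d where "d = gcd q M"
    define a where "a = fst (bezout_coefficients q M)"
    define b where "b = snd (bezout_coefficients q M)"
    have bz: "a * q + b * M = d"
      unfolding d_def a_def b_def by (rule bezout_coefficients_fst_snd)
    have "d dvd M" unfolding d_def by simp
    then obtain e where Me: "M = d * e" by (elim dvdE)
    have "degree d = 0"
    proof (rule ccontr)
      assume "degree d \<noteq> 0"
      then have "degree e = 0" using irr[OF Me] by simp
      then obtain c where e: "e = [:c:]" by (metis degree_eq_zeroE)
      have "c \<noteq> 0" using M0 Me e by auto
      have "poly (map_poly of_rat M) \<gamma> = poly (map_poly of_rat d) \<gamma> * of_rat c"
        using Me e by (simp add: rpoly_mult rpoly_const of_rat_hom.map_poly_hom_smult del: pCons_0_0)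
      then have "poly (map_poly (of_rat :: rat \<Rightarrow> complex) d) \<gamma> = 0" using root \<open>c \<noteq> 0\<close> by simp
      moreover have "d dvd q" unfolding d_def by simp
      then obtain f where "q = d * f" by (elim dvdE)
      ultimately have "x = 0" using x by (simp add: rpoly_mult)
      then show False using x0 by simp
    qed
    then obtain c where dc: "d = [:c:]" by (metis degree_eq_zeroE)
    have "d \<noteq> 0" using x0 x d_def by auto
    then have c0: "c \<noteq> 0" using dc by simp
    have "poly (map_poly (of_rat :: rat \<Rightarrow> complex) a) \<gamma> * x = of_rat c"
      using arg_cong[OF bz, of "\<lambda>t. poly (map_poly (of_rat :: rat \<Rightarrow> complex) t) \<gamma>"] x root
      by (simp add: rpoly_add rpoly_mult dc rpoly_const of_rat_hom.map_poly_hom_smult del: pCons_0_0)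
    then have "inverse x = poly (map_poly of_rat (Polynomial.smult (1 / c) a)) \<gamma>"
      using c0 x0 by (simp add: rpoly_mult[of "[:1/c:]" a, simplified] rpoly_const of_rat_hom.map_poly_hom_smult field_simps of_rat_divide
          del: pCons_0_0)
    then show "inverse x \<in> ?F" by auto
  qed
  have "\<gamma> \<in> ?F" by (rule CollectI, rule exI[of _ "Polynomial.monom 1 1"]) (simp add: rp_monom poly_monom)
  then have "Qadj {\<gamma>} \<subseteq> ?F" using Qadj_least[OF sf] by simp
  moreover have "?F \<subseteq> Qadj {\<gamma>}"
    using sf_rpoly[OF subfield_Qadj] Qadj_sub[of "{\<gamma>}"] by auto
  ultimately show ?thesis by blast
qed



lemma minpoly_degree:
  fixes M :: "rat poly" and \<gamma> :: complex
  assumes root: "poly (map_poly of_rat M) \<gamma> = 0"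
    and irr: "\<And>g h. M = g * h \<Longrightarrow> degree g = 0 \<or> degree h = 0"
    and M0: "M \<noteq> 0"
  shows "Q_degree_eq (Qadj {\<gamma>}) (degree M)"
proof -
  define n where "n = degree M"
  have F: "Qadj {\<gamma>} = {poly (map_poly of_rat q) \<gamma> | q. True}"
    by (rule minpoly_field[OF root irr M0])
  have small: "q = 0" if "poly (map_poly of_rat q) \<gamma> = 0" "degree q < n" for q
    using minpoly_root_deg[OF root irr M0, of q] that n_def by force
  have inj: "inj_on (\<lambda>i. \<gamma> ^ i) {..<n}"
  proof (rule inj_onI, rule ccontr)
    fix i j assume i: "i \<in> {..<n}" and j: "j \<in> {..<n}" and eq: "\<gamma> ^ i = \<gamma> ^ j" and ne: "i \<noteq> j"
    define q :: "rat poly" where "q = Polynomial.monom 1 i - Polynomial.monom 1 j"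
    have "poly (map_poly of_rat q) \<gamma> = 0" unfolding q_def rpoly_diff rp_monom using eq by simp
    have "degree q \<le> max i j" unfolding q_def
      by (intro degree_diff_le) (auto intro: order.trans[OF degree_monom_le])
    then have "degree q < n" using i j by simp
    moreover note \<open>poly (map_poly of_rat q) \<gamma> = 0\<close>
    ultimately have "q = 0" using small by blast
    then have "Polynomial.coeff q i = 0" by simp
    then show False unfolding q_def using ne by (simp add: coeff_monom)
  qed
  define B where "B = (\<lambda>i. \<gamma> ^ i) ` {..<n}"
  have cardB: "card B = n" unfolding B_def using card_image[OF inj] by simp
  have sumB: "(\<Sum>b\<in>B. g b) = (\<Sum>i<n. g (\<gamma> ^ i))" for g :: "complex \<Rightarrow> complex"
    unfolding B_def by (simp add: sum.reindex[OF inj])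
  have "Q_basis (Qadj {\<gamma>}) B"
    unfolding Q_basis_def
  proof (intro conjI allI impI ballI)
    show "finite B" unfolding B_def by simp
    show "B \<subseteq> Qadj {\<gamma>}"
      unfolding B_def using sf_power[OF subfield_Qadj, of \<gamma> "{\<gamma>}"] Qadj_sub[of "{\<gamma>}"] by auto
  next
    fix c :: "complex \<Rightarrow> rat" and b
    assume s: "(\<Sum>b\<in>B. of_rat (c b) * b) = 0" and b: "b \<in> B"
    define Q where "Q = (\<Sum>i<n. Polynomial.monom (c (\<gamma> ^ i)) i)"
    have "poly (map_poly of_rat Q) \<gamma> = 0"
      unfolding Q_def rp_sum_monom using s sumB by simp
    moreover have "degree Q < n"
    proof (cases "n = 0")
      case True
      then obtain c where "M = [:c:]" using n_def by (metis degree_eq_zeroE)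
      then show ?thesis using M0 root by (simp add: rpoly_const del: pCons_0_0)
    next
      case False
      have "degree Q \<le> n - 1"
        unfolding Q_def by (intro degree_le) (auto simp: coeff_sum coeff_monom)
      then show ?thesis using False by simp
    qed
    ultimately have Q0: "Q = 0" by (rule small)
    from b obtain i where i: "i < n" and bi: "b = \<gamma> ^ i" unfolding B_def by auto
    have "Polynomial.coeff Q i = c (\<gamma> ^ i)"
      unfolding Q_def coeff_sum coeff_monom using i by (simp add: sum.delta)
    then show "c b = 0" using Q0 bi by simp
  next
    fix x assume "x \<in> Qadj {\<gamma>}"
    then obtain q where x: "x = poly (map_poly of_rat q) \<gamma>" using F by auto
    define r where "r = q mod M"
    have "q = q div M * M + r" unfolding r_def by simp
    then have xr: "x = poly (map_poly of_rat r) \<gamma>"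
      using x root by (metis rpoly_add rpoly_mult mult_zero_right add_0)
    have cr: "Polynomial.coeff r k = 0" if "k \<ge> n" for k
    proof (cases "r = 0")
      case False
      then have "degree r < n" using degree_mod_less[OF M0, of q] n_def r_def by simp
      then show ?thesis using that by (simp add: coeff_eq_0)
    qed simp
    have "r = (\<Sum>i<n. Polynomial.monom (Polynomial.coeff r i) i)"
      by (rule poly_eqI) (auto simp: coeff_sum coeff_monom cr not_less)
    then have "x = (\<Sum>i<n. of_rat (Polynomial.coeff r i) * \<gamma> ^ i)"
      using xr rp_sum_monom by metis
    also have "\<dots> = (\<Sum>i<n. of_rat (Polynomial.coeff r (inv_into {..<n} (\<lambda>i. \<gamma> ^ i) (\<gamma> ^ i))) * \<gamma> ^ i)"
      using inv_into_f_f[OF inj] by simp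
    also have "\<dots> = (\<Sum>b\<in>B. of_rat (Polynomial.coeff r (inv_into {..<n} (\<lambda>i. \<gamma> ^ i) b)) * b)"
      using sumB by simp
    finally show "\<exists>c :: complex \<Rightarrow> rat. x = (\<Sum>b\<in>B. of_rat (c b) * b)"
      by (intro exI[of _ "\<lambda>b. Polynomial.coeff r (inv_into {..<n} (\<lambda>i. \<gamma> ^ i) b)"])
  qed
  then show ?thesis unfolding Q_degree_eq_def n_def[symmetric] using cardB by blast
qed



lemma eis_aux:
  fixes g h :: "int poly" and p :: int
  assumes pr: "prime p"
    and g0: "p dvd Polynomial.coeff g 0" and h0: "\<not> p dvd Polynomial.coeff h 0"
    and lcg: "\<not> p dvd lead_coeff g"
    and dvdK: "\<And>j. j < degree (g * h) \<Longrightarrow> p dvd Polynomial.coeff (g * h) j"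
    and dg: "degree g < degree (g * h)"
  shows False
proof -
  define k where "k = (LEAST k. \<not> p dvd Polynomial.coeff g k)"
  have ex: "\<not> p dvd Polynomial.coeff g (degree g)" using lcg by simp
  have k1: "\<not> p dvd Polynomial.coeff g k" unfolding k_def by (rule LeastI[of _ "degree g"], rule ex)
  have k2: "k \<le> degree g" unfolding k_def by (rule Least_le, rule ex)
  have lt: "p dvd Polynomial.coeff g i" if "i < k" for i
    using not_less_Least[of i "\<lambda>k. \<not> p dvd Polynomial.coeff g k"] that unfolding k_def by blast
  have "Polynomial.coeff (g * h) k = (\<Sum>i\<le>k. Polynomial.coeff g i * Polynomial.coeff h (k - i))"
    by (rule coeff_mult)
  also have "\<dots> = (\<Sum>i<k. Polynomial.coeff g i * Polynomial.coeff h (k - i)) + Polynomial.coeff g k * Polynomial.coeff h 0"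
    by (simp add: lessThan_Suc_atMost[symmetric])
  finally have eq: "Polynomial.coeff (g * h) k = (\<Sum>i<k. Polynomial.coeff g i * Polynomial.coeff h (k - i)) + Polynomial.coeff g k * Polynomial.coeff h 0" .
  have "p dvd (\<Sum>i<k. Polynomial.coeff g i * Polynomial.coeff h (k - i))"
    by (rule dvd_sum) (simp add: lt)
  moreover have "p dvd Polynomial.coeff (g * h) k" using dvdK k2 dg by simp
  ultimately have "p dvd Polynomial.coeff g k * Polynomial.coeff h 0"
    using eq by (metis dvd_add_right_iff)
  then show False using k1 h0 pr by (simp add: prime_dvd_mult_iff)
qed

lemma eisenstein_int:
  fixes K g h :: "int poly" and p :: int
  assumes pr: "prime p" and lc: "lead_coeff K = 1"
    and dvdK: "\<And>j. j < degree K \<Longrightarrow> p dvd Polynomial.coeff K j"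
    and n2: "\<not> p ^ 2 dvd Polynomial.coeff K 0"
    and Kgh: "K = g * h"
  shows "degree g = 0 \<or> degree h = 0"
proof (rule ccontr)
  assume "\<not> (degree g = 0 \<or> degree h = 0)"
  then have dg: "degree g > 0" and dh: "degree h > 0" by auto
  have K0: "K \<noteq> 0" using lc by auto
  then have gh0: "g \<noteq> 0" "h \<noteq> 0" using Kgh by auto
  have degK: "degree K = degree g + degree h" using Kgh gh0 by (simp add: degree_mult_eq)
  have "lead_coeff g * lead_coeff h = 1" using lc Kgh by (simp add: lead_coeff_mult)
  then have lcg: "\<not> p dvd lead_coeff g" and lch: "\<not> p dvd lead_coeff h"
    using pr by (metis dvd_mult_right dvd_mult_left not_prime_unit dvd_trans one_dvd)+
  have c0: "Polynomial.coeff K 0 = Polynomial.coeff g 0 * Polynomial.coeff h 0"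
    using Kgh by (simp add: coeff_mult)
  have "p dvd Polynomial.coeff K 0" using dvdK degK dg by simp
  then have "p dvd Polynomial.coeff g 0 \<or> p dvd Polynomial.coeff h 0"
    using c0 pr by (simp add: prime_dvd_mult_iff)
  moreover have "\<not> (p dvd Polynomial.coeff g 0 \<and> p dvd Polynomial.coeff h 0)"
    using n2 c0 by (auto simp: power2_eq_square intro: mult_dvd_mono)
  ultimately consider "p dvd Polynomial.coeff g 0" "\<not> p dvd Polynomial.coeff h 0"
    | "p dvd Polynomial.coeff h 0" "\<not> p dvd Polynomial.coeff g 0" by blast
  then show False
  proof cases
    case 1
    then show False using eis_aux[OF pr 1 lcg] dvdK Kgh degK dh by auto
  next
    case 2
    have "K = h * g" using Kgh by (simp add: mult.commute)
    then show False using eis_aux[OF pr 2 lch] dvdK degK dg by auto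
  qed
qed

lemma eisenstein_rat:
  fixes K :: "int poly" and g h :: "rat poly" and p :: int
  assumes pr: "prime p" and lc: "lead_coeff K = 1"
    and dvdK: "\<And>j. j < degree K \<Longrightarrow> p dvd Polynomial.coeff K j"
    and n2: "\<not> p ^ 2 dvd Polynomial.coeff K 0"
    and Kgh: "map_poly rat_of_int K = g * h"
  shows "degree g = 0 \<or> degree h = 0"
proof -
  obtain g' h' where "K = g' * h'" "degree g' = degree g" "degree h' = degree h"
    using rat_to_int_factor[OF Kgh] by blast
  then show ?thesis using eisenstein_int[OF pr lc dvdK n2] by metis
qed



definition dl :: "nat \<Rightarrow> int" where "dl p = (if p mod 4 = 1 then 1 else -1)"
definition s4 :: "nat \<Rightarrow> int" where "s4 m = (if m mod 4 = 0 \<or> m mod 4 = 1 then 1 else -1)"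
definition Gz :: "nat \<Rightarrow> int poly" where
  "Gz p = (\<Sum>k\<le>p. Polynomial.monom (int (p choose k) * s4 (p - k)) k)"
definition Qc :: "nat \<Rightarrow> complex poly" where "Qc p = Polynomial.smult (1 + \<i>) ([:\<i>, 1:] ^ p)"

lemma i_pow_mod: "\<i> ^ m = \<i> ^ (m mod 4)"
proof -
  have e: "\<i> ^ 4 = (1 :: complex)" by (simp add: power_mult[of _ 2 2, simplified])
  have "\<i> ^ m = \<i> ^ (4 * (m div 4) + m mod 4)" by simp
  also have "\<dots> = (\<i> ^ 4) ^ (m div 4) * \<i> ^ (m mod 4)" by (simp only: power_add power_mult)
  also have "\<dots> = \<i> ^ (m mod 4)" by (simp only: e power_one mult_1_left)
  finally show ?thesis .
qed

lemma Im_s4: "Im ((1 + \<i>) * \<i> ^ m) = of_int (s4 m)"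
proof -
  have "m mod 4 < 4" by simp
  then consider "m mod 4 = 0" | "m mod 4 = 1" | "m mod 4 = 2" | "m mod 4 = 3" by linarith
  then show ?thesis
  proof cases
    case 1 then show ?thesis by (subst i_pow_mod) (simp add: s4_def)
  next
    case 2 then show ?thesis by (subst i_pow_mod) (simp add: s4_def)
  next
    case 3 then show ?thesis by (subst i_pow_mod) (simp add: s4_def power2_i[unfolded power2_eq_square] numeral_2_eq_2)
  next
    case 4
    have "\<i> ^ 3 = - \<i>" by (simp add: power3_eq_cube)
    then show ?thesis using 4 by (subst i_pow_mod) (simp add: s4_def algebra_simps)
  qed
qed

lemma coeff_Gz: "Polynomial.coeff (Gz p) k = (if k \<le> p then int (p choose k) * s4 (p - k) else 0)"
  unfolding Gz_def by (simp add: coeff_sum coeff_monom)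

lemma coeff_lin_pow_gt: "k > n \<Longrightarrow> Polynomial.coeff ([:a, 1:] ^ n) k = (0 :: 'a :: comm_ring_1)"
proof -
  assume "k > n"
  moreover have "degree ([:a, 1:] ^ n) \<le> n"
    using degree_power_le[of "[:a, 1:]" n] by simp
  ultimately show ?thesis by (simp add: coeff_eq_0)
qed

lemma Gp1_Gz: "Gp1 p = map_poly of_int (Gz p)"
proof (rule poly_eqI)
  fix k
  have "Polynomial.coeff (Gp1 p) k = Im ((1 + \<i>) * Polynomial.coeff ([:\<i>, 1:] ^ p) k)"
    unfolding Gp1_def by (simp add: coeff_map_poly)
  also have "\<dots> = (if k \<le> p then real (p choose k) * of_int (s4 (p - k)) else 0)"
  proof (cases "k \<le> p")
    case True
    then have "Polynomial.coeff ([:\<i>, 1:] ^ p) k = of_nat (p choose k) * \<i> ^ (p - k)"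
      using coeff_linear_poly_power[of k p \<i> 1] by simp
    then have "Im ((1 + \<i>) * Polynomial.coeff ([:\<i>, 1:] ^ p) k) = real (p choose k) * Im ((1 + \<i>) * \<i> ^ (p - k))"
      by (simp add: algebra_simps)
    then show ?thesis using True Im_s4 by simp
  next
    case False
    then show ?thesis using coeff_lin_pow_gt[of p k \<i>] by simp
  qed
  also have "\<dots> = Polynomial.coeff (map_poly of_int (Gz p)) k"
    by (simp add: coeff_map_poly coeff_Gz)
  finally show "Polynomial.coeff (Gp1 p) k = Polynomial.coeff (map_poly of_int (Gz p)) k" .
qed

lemma L_Im: "poly (map_poly Im Q) x = Im (poly Q (of_real x))"
proof (induction Q)
  case 0 then show ?case by simp
next
  case (pCons a Q)
  then show ?case by (simp add: map_poly_pCons)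
qed

lemma L1: "poly (map_poly complex_of_real (map_poly Im Q)) z = (poly Q z - cnj (poly Q (cnj z))) / (2 * \<i>)"
proof (induction Q)
  case 0 then show ?case by simp
next
  case (pCons a Q)
  have "map_poly complex_of_real (map_poly Im (pCons a Q)) = map_poly (\<lambda>x. complex_of_real (Im x)) (pCons a Q)"
    by (simp add: map_poly_map_poly o_def)
  also have "\<dots> = pCons (of_real (Im a)) (map_poly (\<lambda>x. complex_of_real (Im x)) Q)"
    by (rule map_poly_pCons) (use pCons(1) in auto)
  also have "\<dots> = pCons (of_real (Im a)) (map_poly complex_of_real (map_poly Im Q))"
    by (simp add: map_poly_map_poly o_def)
  finally have "map_poly complex_of_real (map_poly Im (pCons a Q)) = pCons (of_real (Im a)) (map_poly complex_of_real (map_poly Im Q))" .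
  note eq = this
  have ia: "complex_of_real (Im a) = (a - cnj a) / (2 * \<i>)" by (simp add: complex_eq_iff)
  show ?case unfolding eq poly_pCons pCons(2) ia by (simp add: field_simps)
qed



lemma odd_cases:
  assumes "odd (p :: nat)"
  obtains t where "p = 4 * t + 1" "dl p = 1" | t where "p = 4 * t + 3" "dl p = -1"
proof -
  have "p mod 4 = 1 \<or> p mod 4 = 3" using assms by presburger
  then show ?thesis
  proof
    assume h: "p mod 4 = 1"
    then have "p = 4 * (p div 4) + 1" by presburger
    then show ?thesis using that h by (auto simp: dl_def)
  next
    assume h: "p mod 4 = 3"
    then have "p = 4 * (p div 4) + 3" by presburger
    then show ?thesis using that h by (auto simp: dl_def)
  qed
qed

lemma im1_sq: "(\<i> - 1) ^ 2 = - 2 * (\<i> :: complex)"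
  by (simp add: power2_eq_square algebra_simps)
lemma ip1_sq: "(\<i> + 1) ^ 2 = 2 * (\<i> :: complex)"
  by (simp add: power2_eq_square algebra_simps)
lemma im1_4: "(\<i> - 1) ^ 4 = (- 4 :: complex)"
proof -
  have "(\<i> - 1) ^ 4 = ((\<i> - 1) ^ 2) ^ (2::nat)" by (simp flip: power_mult)
  then show ?thesis unfolding im1_sq by (simp add: power2_eq_square)
qed
lemma ip1_4: "(\<i> + 1) ^ 4 = (- 4 :: complex)"
proof -
  have "(\<i> + 1) ^ 4 = ((\<i> + 1) ^ 2) ^ (2::nat)" by (simp flip: power_mult)
  then show ?thesis unfolding ip1_sq by (simp add: power2_eq_square)
qed
lemma m4_pow: "(- 4 :: complex) ^ t = complex_of_real ((- 4) ^ t)"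
  by simp

lemma poly_Qc: "poly (Polynomial.smult (1 + \<i>) ([:\<i>, 1:] ^ p)) w = (1 + \<i>) * (\<i> + w) ^ p"
  by simp

lemma Gz_root:
  assumes "odd p"
  shows "poly (Gz p) (- dl p) = 0"
proof -
  have "real_of_int (poly (Gz p) (- dl p)) = poly (Gp1 p) (of_int (- dl p))"
    by (simp only: Gp1_Gz of_int_hom.poly_map_poly)
  also have "\<dots> = Im ((1 + \<i>) * (\<i> + complex_of_real (of_int (- dl p))) ^ p)"
    unfolding Gp1_def L_Im poly_Qc ..
  also have "\<dots> = 0"
  proof (cases rule: odd_cases[OF assms])
    case (1 t)
    have "(1 + \<i>) * (\<i> - 1) ^ (4 * t + 1) = (1 + \<i>) * (((\<i> - 1) ^ 4) ^ t * (\<i> - 1))"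
      by (simp only: power_add power_mult power_one_right)
    also have "\<dots> = complex_of_real (- 2 * (- 4) ^ t)"
      unfolding im1_4 m4_pow by (simp add: algebra_simps)
    finally show ?thesis using 1 by simp
  next
    case (2 t)
    have e: "(1 + \<i>) * (\<i> + 1) ^ (4 * t + 3) = (\<i> + 1) ^ Suc (4 * t + 3)"
      by (simp only: power_Suc add.commute)
    have "Suc (4 * t + 3) = 4 * (t + 1)" by simp
    then have "(1 + \<i>) * (\<i> + 1) ^ (4 * t + 3) = ((\<i> + 1) ^ 4) ^ (t + 1)"
      using e by (simp only: power_mult)
    also have "\<dots> = complex_of_real ((- 4) ^ (t + 1))"
      unfolding ip1_4 m4_pow ..
    finally show ?thesis using 2 by simp
  qed
  finally show ?thesis by simp
qed

definition Hz :: "nat \<Rightarrow> int poly" where "Hz p = synthetic_div (Gz p) (- dl p)"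

lemma Gz_fact:
  assumes "odd p"
  shows "Gz p = [:dl p, 1:] * Hz p"
  using synthetic_div_correct'[of "- dl p" "Gz p"] Gz_root[OF assms] unfolding Hz_def by simp

lemma Hp1_Hz:
  assumes "odd p"
  shows "Hp1 p = map_poly of_int (Hz p)"
proof -
  have d: "delta4 p = of_int (dl p)" unfolding delta4_def dl_def by simp
  have m: "map_poly real_of_int [:dl p, 1:] = [:delta4 p, 1:]"
    unfolding d by (simp add: of_int_hom.map_poly_pCons_hom)
  have "Gp1 p = map_poly real_of_int [:dl p, 1:] * map_poly of_int (Hz p)"
    by (simp only: Gp1_Gz Gz_fact[OF assms] of_int_poly_hom.hom_mult)
  then have "Gp1 p = [:delta4 p, 1:] * map_poly of_int (Hz p)" unfolding m .
  then show ?thesis unfolding Hp1_def by (simp only:) (rule nonzero_mult_div_cancel_left, simp)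
qed



lemma pderiv_map_Im: "pderiv (map_poly Im Q) = map_poly Im (pderiv Q)"
  by (rule poly_eqI) (simp add: coeff_pderiv coeff_map_poly)

lemma poly_pderiv_Qc:
  assumes "p > 0"
  shows "poly (pderiv (Polynomial.smult (1 + \<i>) ([:\<i>, 1:] ^ p))) w = (1 + \<i>) * of_nat p * (\<i> + w) ^ (p - 1)"
proof -
  obtain m where m: "p = Suc m" using assms by (cases p) auto
  show ?thesis unfolding m pderiv_smult pderiv_power_Suc by (simp add: pderiv_pCons)
qed

lemma Hz_val:
  assumes "odd p" "p > 0"
  obtains t c where "poly (Hz p) (- dl p) = int p * (- 4) ^ t * c" "c = 1 \<or> c = 2"
proof -
  have pd: "pderiv (Gz p) = [:dl p, 1:] * pderiv (Hz p) + Hz p"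
    unfolding Gz_fact[OF assms(1)] pderiv_mult by (simp add: pderiv_pCons)
  have "poly (Hz p) (- dl p) = poly (pderiv (Gz p)) (- dl p)"
    unfolding pd by simp
  then have "real_of_int (poly (Hz p) (- dl p)) = poly (pderiv (map_poly real_of_int (Gz p))) (of_int (- dl p))"
    by (simp only: of_int_hom.map_poly_pderiv[symmetric] of_int_hom.poly_map_poly)
  also have "\<dots> = Im ((1 + \<i>) * of_nat p * (\<i> + complex_of_real (of_int (- dl p))) ^ (p - 1))"
    unfolding Gp1_Gz[symmetric] Gp1_def pderiv_map_Im L_Im poly_pderiv_Qc[OF assms(2)] ..
  finally have eq: "real_of_int (poly (Hz p) (- dl p)) = Im ((1 + \<i>) * of_nat p * (\<i> + complex_of_real (of_int (- dl p))) ^ (p - 1))" .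
  show ?thesis
  proof (cases rule: odd_cases[OF assms(1)])
    case (1 t)
    have "(\<i> - 1) ^ (p - 1) = ((\<i> - 1) ^ 4) ^ t" using 1 by (simp add: power_mult)
    also have "\<dots> = complex_of_real ((- 4) ^ t)" unfolding im1_4 m4_pow ..
    finally have "real_of_int (poly (Hz p) (- dl p)) = real p * (- 4) ^ t"
      using eq 1 by (simp add: algebra_simps)
    then have "real_of_int (poly (Hz p) (- dl p)) = real_of_int (int p * (- 4) ^ t * 1)" by simp
    then have "poly (Hz p) (- dl p) = int p * (- 4) ^ t * 1" by (simp only: of_int_eq_iff)
    then show ?thesis using that by blast
  next
    case (2 t)
    have pm: "p - 1 = 4 * t + 2" using 2 by simp
    have "(\<i> + 1) ^ (p - 1) = ((\<i> + 1) ^ 4) ^ t * (\<i> + 1) ^ 2" unfolding pm by (simp only: power_mult power_add)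
    also have "\<dots> = complex_of_real ((- 4) ^ t) * (2 * \<i>)" unfolding ip1_4 m4_pow ip1_sq ..
    finally have "real_of_int (poly (Hz p) (- dl p)) = real p * (- 4) ^ t * 2"
      using eq 2 by (simp add: algebra_simps)
    then have "real_of_int (poly (Hz p) (- dl p)) = real_of_int (int p * (- 4) ^ t * 2)" by simp
    then have "poly (Hz p) (- dl p) = int p * (- 4) ^ t * 2" by (simp only: of_int_eq_iff)
    then show ?thesis using that by blast
  qed
qed

lemma Hz_val_ndvd:
  assumes "prime p" "odd p"
  shows "\<not> (int p) ^ 2 dvd poly (Hz p) (- dl p)"
proof
  assume d: "(int p) ^ 2 dvd poly (Hz p) (- dl p)"
  have p0: "p > 0" using assms prime_gt_0_nat by blast
  obtain t c where v: "poly (Hz p) (- dl p) = int p * (- 4) ^ t * c" and c: "c = 1 \<or> c = 2"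
    using Hz_val[OF assms(2) p0] by blast
  have pr: "prime (int p)" using assms by simp
  have "int p * int p dvd int p * ((- 4) ^ t * c)" using d v by (simp add: power2_eq_square mult.assoc)
  then have "int p dvd (- 4) ^ t * c" using p0 by simp
  then have "int p dvd (- 4) ^ t \<or> int p dvd c" using pr by (simp add: prime_dvd_mult_iff)
  then have "int p dvd 4 \<or> int p dvd c" using pr prime_dvd_power by (metis dvd_minus_iff)
  then have "int p dvd 2 * 2 \<or> int p dvd 2 \<or> int p dvd 1" using c by auto
  then have "int p dvd 2" using pr by (metis prime_dvd_mult_iff not_prime_unit)
  then have "p dvd 2" using int_dvd_int_iff[of p 2] by simp
  then have "p \<le> 2" by (simp add: dvd_imp_le)
  moreover have "p \<ge> 2" using assms prime_ge_2_nat by blast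
  ultimately have "p = 2" by simp
  then show False using assms by simp
qed



lemma deg_Gz: "degree (Gz p) = p" and lc_Gz: "lead_coeff (Gz p) = 1"
proof -
  have c: "Polynomial.coeff (Gz p) p = 1" by (simp add: coeff_Gz s4_def)
  have "degree (Gz p) \<le> p" by (rule degree_le) (simp add: coeff_Gz)
  moreover have "p \<le> degree (Gz p)" by (rule le_degree) (simp add: c)
  ultimately show "degree (Gz p) = p" by simp
  then show "lead_coeff (Gz p) = 1" using c by simp
qed

lemma deg_Hz: assumes "odd p" shows "degree (Hz p) = p - 1" and "lead_coeff (Hz p) = 1"
proof -
  have H0: "Hz p \<noteq> 0" using Gz_fact[OF assms] lc_Gz[of p] by auto
  have "degree (Gz p) = 1 + degree (Hz p)"
    unfolding Gz_fact[OF assms] using H0 by (subst degree_mult_eq) auto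
  then show "degree (Hz p) = p - 1" using deg_Gz[of p] by simp
  have "lead_coeff (Gz p) = lead_coeff (Hz p)"
    unfolding Gz_fact[OF assms] by (simp only: lead_coeff_mult) simp
  then show "lead_coeff (Hz p) = 1" using lc_Gz[of p] by simp
qed

definition Kz :: "nat \<Rightarrow> int poly" where "Kz p = pcompose (Hz p) [:- dl p, 1:]"

lemma deg_Kz: assumes "odd p" shows "degree (Kz p) = p - 1" and "lead_coeff (Kz p) = 1"
proof -
  show "degree (Kz p) = p - 1" unfolding Kz_def using deg_Hz[OF assms] by (simp add: degree_pcompose)
  have "lead_coeff (Hz p \<circ>\<^sub>p [:- dl p, 1:]) = lead_coeff (Hz p) * lead_coeff [:- dl p, 1:] ^ degree (Hz p)"
    by (rule lead_coeff_comp) simp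
  then show "lead_coeff (Kz p) = 1" unfolding Kz_def using deg_Hz[OF assms] by simp
qed

lemma coeff_Kz0: "Polynomial.coeff (Kz p) 0 = poly (Hz p) (- dl p)"
  unfolding Kz_def by (simp add: poly_0_coeff_0[symmetric] poly_pcompose)

lemma Gz_modp:
  assumes "prime p" "odd p"
  shows "int p dvd Polynomial.coeff (Gz p - [:dl p, 1:] ^ p) k"
proof (cases "k \<le> p")
  case False
  then show ?thesis using coeff_lin_pow_gt[of p k "dl p"] by (simp add: coeff_Gz)
next
  case True
  have "Polynomial.coeff (Gz p - [:dl p, 1:] ^ p) k = int (p choose k) * (s4 (p - k) - dl p ^ (p - k))"
    using True coeff_linear_poly_power[of k p "dl p" 1] by (simp add: coeff_Gz algebra_simps)
  moreover have "int p dvd int (p choose k) * (s4 (p - k) - dl p ^ (p - k))"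
  proof (cases "k = 0 \<or> k = p")
    case True
    then show ?thesis
    proof
      assume k: "k = 0"
      have "s4 p = dl p ^ p"
      proof (cases rule: odd_cases[OF assms(2)])
        case (1 t) then show ?thesis by (simp add: s4_def)
      next
        case (2 t)
        have "s4 p = -1" using 2 by (simp add: s4_def)
        moreover have "dl p ^ p = -1" using 2 assms(2) by simp
        ultimately show ?thesis by simp
      qed
      then show ?thesis using k by simp
    next
      assume k: "k = p"
      then show ?thesis by (simp add: s4_def)
    qed
  next
    case False
    then have "p dvd p choose k" using \<open>k \<le> p\<close> assms(1)
      by (intro dvd_choose_prime) auto
    then have "int p dvd int (p choose k)" by simp
    then show ?thesis by simp
  qed
  ultimately show ?thesis by simp
qed

lemma Kz_dvd:
  assumes "prime p" "odd p" "j < p - 1"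
  shows "int p dvd Polynomial.coeff (Kz p) j"
proof -
  define L :: "int poly" where "L = [:- dl p, 1:]"
  define D where "D = Gz p - [:dl p, 1:] ^ p"
  define R where "R = map_poly (\<lambda>c. c div int p) D"
  have DR: "D = Polynomial.smult (int p) R"
  proof (rule poly_eqI)
    fix k
    have "int p dvd Polynomial.coeff D k" unfolding D_def by (rule Gz_modp[OF assms(1,2)])
    then show "Polynomial.coeff D k = Polynomial.coeff (Polynomial.smult (int p) R) k"
      unfolding R_def by (simp add: coeff_map_poly dvd_mult_div_cancel)
  qed
  have lin: "pcompose [:dl p, 1:] L = [:0, 1:]" unfolding L_def by (simp add: pcompose_pCons)
  have G: "Gz p = [:dl p, 1:] ^ p + Polynomial.smult (int p) R" using DR unfolding D_def by (simp add: algebra_simps)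
  have "pcompose (Gz p) L = [:0, 1:] ^ p + Polynomial.smult (int p) (pcompose R L)"
    unfolding G pcompose_add pcompose_smult pcompose_hom.hom_power lin ..
  moreover have "pcompose (Gz p) L = [:0, 1:] * Kz p"
    unfolding Gz_fact[OF assms(2)] pcompose_mult lin unfolding Kz_def L_def ..
  ultimately have e: "[:0, 1:] * Kz p = [:0, 1:] ^ p + Polynomial.smult (int p) (pcompose R L)" by simp
  have "Polynomial.coeff (Kz p) j = Polynomial.coeff ([:0, 1:] * Kz p) (Suc j)" by simp
  also have "\<dots> = Polynomial.coeff ([:0, 1:] ^ p) (Suc j) + int p * Polynomial.coeff (pcompose R L) (Suc j)"
    unfolding e by simp
  also have "Polynomial.coeff ([:0::int, 1:] ^ p) (Suc j) = 0"
  proof -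
    have "Suc j < p" using assms(3) by linarith
    then show ?thesis using coeff_linear_poly_power[of "Suc j" p "0::int" 1] by simp
  qed
  finally show ?thesis by simp
qed

lemma Kq_irr:
  assumes "prime p" "odd p" "map_poly rat_of_int (Kz p) = g * h"
  shows "degree g = 0 \<or> degree h = 0"
proof (rule eisenstein_rat[OF _ _ _ _ assms(3)])
  show "prime (int p)" using assms by simp
  show "lead_coeff (Kz p) = 1" using deg_Kz[OF assms(2)] by simp
  show "int p dvd Polynomial.coeff (Kz p) j" if "j < degree (Kz p)" for j
    using Kz_dvd[OF assms(1,2)] that deg_Kz[OF assms(2)] by simp
  show "\<not> int p ^ 2 dvd Polynomial.coeff (Kz p) 0"
    unfolding coeff_Kz0 using Hz_val_ndvd[OF assms(1,2)] .
qed



lemma zeta_pow: "exp (2 * pi * \<i> / of_nat n) ^ k = cis (2 * pi * real k / real n)"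
proof -
  have "exp (2 * pi * \<i> / of_nat n) = cis (2 * pi / real n)"
    by (simp add: cis_conv_exp field_simps)
  then show ?thesis by (simp add: DeMoivre field_simps)
qed

lemma zeta_p:
  assumes "p > 0"
  shows "exp (2 * pi * \<i> / of_nat (4 * p)) ^ p = \<i>"
proof -
  have "2 * pi * real p / real (4 * p) = pi / 2" using assms by (simp add: field_simps)
  then show ?thesis unfolding zeta_pow using assms by simp
qed

lemma roots_unity_zeta:
  assumes "n > 0" "w ^ n = 1"
  obtains k where "k < n" "w = exp (2 * pi * \<i> / of_nat n) ^ k"
proof -
  have "w \<in> (\<lambda>k. cis (2 * pi * real k / real n)) ` {..<n}"
    using bij_betw_roots_unity[OF assms(1)] assms(2) unfolding bij_betw_def by auto
  then show ?thesis using that unfolding zeta_pow by auto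
qed

lemma sf_chebyshev:
  assumes K: "subfield_C K" and u0: "u \<noteq> 0" and u1: "u + inverse u \<in> K"
  shows "u ^ k + inverse u ^ k \<in> K"
proof -
  have "u ^ k + inverse u ^ k \<in> K \<and> u ^ Suc k + inverse u ^ Suc k \<in> K" for k
  proof (induction k)
    case 0
    then show ?case using u1 sf_add[OF K sf_1[OF K] sf_1[OF K]] by simp
  next
    case (Suc k)
    have "u ^ Suc (Suc k) + inverse u ^ Suc (Suc k) =
          (u + inverse u) * (u ^ Suc k + inverse u ^ Suc k) - (u ^ k + inverse u ^ k)"
    proof -
      define v where "v = inverse u"
      have uv: "u * v = 1" "v * u = 1" using u0 unfolding v_def by simp_all
      have a: "u * v ^ Suc k = v ^ k" using uv by (simp add: mult.assoc[symmetric])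
      have b: "v * u ^ Suc k = u ^ k" using uv by (simp add: mult.assoc[symmetric])
      have "(u + v) * (u ^ Suc k + v ^ Suc k) = u * u ^ Suc k + u * v ^ Suc k + v * u ^ Suc k + v * v ^ Suc k"
        by (simp add: algebra_simps)
      also have "\<dots> = u ^ Suc (Suc k) + v ^ k + u ^ k + v ^ Suc (Suc k)"
        by (simp only: a b power_Suc[symmetric])
      finally show ?thesis unfolding v_def by (simp add: algebra_simps)
    qed
    then show ?case using Suc sf_mult[OF K] sf_diff[OF K] u1 by simp
  qed
  then show ?thesis by blast
qed

lemma i_pow_cases: "(\<i> :: complex) ^ m = 1 \<and> m mod 4 = 0 \<or> \<i> ^ m = \<i> \<and> m mod 4 = 1 \<or> \<i> ^ m = -1 \<and> m mod 4 = 2 \<or> \<i> ^ m = - \<i> \<and> m mod 4 = 3"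
proof -
  have "m mod 4 < 4" by simp
  then consider "m mod 4 = 0" | "m mod 4 = 1" | "m mod 4 = 2" | "m mod 4 = 3" by linarith
  then show ?thesis
  proof cases
    case 1 then show ?thesis by (subst (1 2 3 4) i_pow_mod) simp
  next
    case 2 then show ?thesis by (subst (1 2 3 4) i_pow_mod) simp
  next
    case 3 then show ?thesis by (subst (1 2 3 4) i_pow_mod) (simp add: numeral_2_eq_2)
  next
    case 4
    have "\<i> ^ 3 = - \<i>" by (simp add: power3_eq_cube)
    then show ?thesis using 4 by (subst (1 2 3 4) i_pow_mod) simp
  qed
qed



theorem lemma7:
  fixes p :: nat and \<alpha> :: complex
  assumes "prime p" and "odd p"
    and "poly (map_poly complex_of_real (Hp1 p)) \<alpha> = 0"
  defines "\<zeta> \<equiv> exp (2 * pi * \<i> / of_nat (4 * p))"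
  shows "Qadj {\<alpha>} = Qadj {\<zeta> + inverse \<zeta>}
    \<and> Q_degree_eq (Qadj {\<alpha>}) (p - 1)
    \<and> Qadj {\<zeta> ^ 4 + inverse (\<zeta> ^ 4)} \<subseteq> Qadj {\<alpha>}"
proof -
  note pr = assms(1) and od = assms(2) and root = assms(3)
  have p2: "p \<ge> 2" using pr prime_ge_2_nat by blast
  have p0: "p > 0" using p2 by simp
  have p3: "p \<ge> 3" using p2 od by presburger
  define Kq where "Kq = map_poly rat_of_int (Kz p)"
  have irr: "\<And>g h. Kq = g * h \<Longrightarrow> degree g = 0 \<or> degree h = 0"
    unfolding Kq_def by (rule Kq_irr[OF pr od])
  have degKq: "degree Kq = p - 1" using deg_Kz(1)[OF od] unfolding Kq_def by simp
  have Kq0: "Kq \<noteq> 0" using deg_Kz(2)[OF od] unfolding Kq_def by auto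
  define \<gamma> where "\<gamma> = \<alpha> + of_int (dl p)"
  have HC: "map_poly complex_of_real (Hp1 p) = map_poly of_int (Hz p)"
    unfolding Hp1_Hz[OF od] by (simp add: map_poly_map_poly o_def)
  have rootH: "poly (map_poly complex_of_int (Hz p)) \<alpha> = 0" using root HC by simp
  have KC: "map_poly (of_rat :: rat \<Rightarrow> complex) Kq = map_poly of_int (Kz p)"
    unfolding Kq_def by (simp add: map_poly_map_poly o_def)
  have rootK: "poly (map_poly of_rat Kq) \<gamma> = 0"
    unfolding KC Kz_def of_int_hom.map_poly_pcompose poly_pcompose
    using rootH by (simp add: \<gamma>_def of_int_hom.map_poly_pCons_hom)
  have Qag: "Qadj {\<alpha>} = Qadj {\<gamma>}"
  proof
    have "\<alpha> = \<gamma> - of_int (dl p)" unfolding \<gamma>_def by simp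
    then have "\<alpha> \<in> Qadj {\<gamma>}"
      using sf_diff[OF subfield_Qadj _ sf_of_int[OF subfield_Qadj]] Qadj_sub[of "{\<gamma>}"] by auto
    then show "Qadj {\<alpha>} \<subseteq> Qadj {\<gamma>}" by (rule Qadj_elem)
    have "\<gamma> \<in> Qadj {\<alpha>}" unfolding \<gamma>_def
      using sf_add[OF subfield_Qadj _ sf_of_int[OF subfield_Qadj]] Qadj_sub[of "{\<alpha>}"] by auto
    then show "Qadj {\<gamma>} \<subseteq> Qadj {\<alpha>}" by (rule Qadj_elem)
  qed
  have deg: "Q_degree_eq (Qadj {\<alpha>}) (p - 1)"
    using minpoly_degree[OF rootK irr Kq0] degKq Qag by simp
  have notrat: "\<alpha> \<noteq> of_rat r" for r
  proof
    assume ar: "\<alpha> = of_rat r"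
    define q where "q = [:- (r + of_int (dl p)), 1:]"
    have "poly (map_poly of_rat q) \<gamma> = 0"
      unfolding q_def \<gamma>_def ar by (simp add: of_rat_hom.map_poly_pCons_hom of_rat_add of_rat_diff of_rat_minus)
    moreover have "q \<noteq> 0" unfolding q_def by simp
    ultimately have "degree Kq \<le> degree q" using minpoly_root_deg[OF rootK irr Kq0] by blast
    then show False using degKq p3 unfolding q_def by simp
  qed
  have G0: "poly (map_poly complex_of_int (Gz p)) \<alpha> = 0"
    unfolding Gz_fact[OF od] of_int_poly_hom.hom_mult poly_mult rootH by simp
  have GC: "map_poly complex_of_int (Gz p) = map_poly complex_of_real (map_poly Im (Polynomial.smult (1 + \<i>) ([:\<i>, 1:] ^ p)))"
    unfolding Gp1_def[symmetric] Gp1_Gz by (simp add: map_poly_map_poly o_def)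
  have "(poly (Polynomial.smult (1 + \<i>) ([:\<i>, 1:] ^ p)) \<alpha> - cnj (poly (Polynomial.smult (1 + \<i>) ([:\<i>, 1:] ^ p)) (cnj \<alpha>))) / (2 * \<i>) = 0"
    using G0 unfolding GC L1 .
  then have E: "(1 + \<i>) * (\<i> + \<alpha>) ^ p = (1 - \<i>) * (\<alpha> - \<i>) ^ p"
    unfolding poly_Qc by simp
  have ai: "\<alpha> - \<i> \<noteq> 0"
  proof
    assume h: "\<alpha> - \<i> = 0"
    then have "\<alpha> = \<i>" by simp
    then have "(1 + \<i>) * (\<i> + \<i>) ^ p = (1 - \<i>) * (\<i> - \<i>) ^ p" using E by simp
    then have "(1 + \<i>) * (\<i> + \<i>) ^ p = 0" using p0 by simp
    moreover have "1 + \<i> \<noteq> 0" "\<i> + \<i> \<noteq> 0" by (simp_all add: complex_eq_iff)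
    ultimately show False by simp
  qed
  have ai2: "\<alpha> + \<i> \<noteq> 0"
  proof
    assume h: "\<alpha> + \<i> = 0"
    have "\<alpha> = (\<alpha> + \<i>) - \<i>" by simp
    then have "\<alpha> = - \<i>" using h by simp
    then have "(1 + \<i>) * (\<i> + - \<i>) ^ p = (1 - \<i>) * (- \<i> - \<i>) ^ p" using E by simp
    then have "(1 - \<i>) * (- \<i> - \<i>) ^ p = 0" using p0 by (simp add: zero_power)
    moreover have "1 - \<i> \<noteq> 0" "- \<i> - \<i> \<noteq> 0" by (simp_all add: complex_eq_iff)
    ultimately show False by simp
  qed
  define w where "w = (\<alpha> + \<i>) / (\<alpha> - \<i>)"
  have c: "1 - \<i> = (1 + \<i>) * (- \<i>)" by (simp add: algebra_simps)
  have n1: "1 + \<i> \<noteq> 0" by (simp add: complex_eq_iff)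
  have E': "(1 + \<i>) * (\<i> + \<alpha>) ^ p = (1 + \<i>) * (- \<i> * (\<alpha> - \<i>) ^ p)"
    using E unfolding c by (simp only: mult.assoc)
  then have "(\<i> + \<alpha>) ^ p = - \<i> * (\<alpha> - \<i>) ^ p" using mult_left_cancel[OF n1] by blast
  then have E2: "(\<alpha> + \<i>) ^ p = - \<i> * (\<alpha> - \<i>) ^ p" by (simp only: add.commute)
  have aip: "(\<alpha> - \<i>) ^ p \<noteq> 0" using ai by simp
  have wp: "w ^ p = - \<i>"
    unfolding w_def power_divide E2 using aip by simp
  have w0: "w \<noteq> 0"
  proof
    assume "w = 0"
    then have "w ^ p = 0" using p0 by simp
    then show False using wp by simp
  qed
  have w1: "w \<noteq> 1" using wp by (auto simp: complex_eq_iff)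
  have "w ^ (4 * p) = (w ^ p) ^ 4" by (simp only: mult.commute[of 4 p] power_mult)
  then have w4p: "w ^ (4 * p) = 1" using wp by simp
  obtain m where mlt: "m < 4 * p" and wm: "w = \<zeta> ^ m"
    using roots_unity_zeta[of "4 * p" w] p0 w4p unfolding \<zeta>_def by auto
  have zp: "\<zeta> ^ p = \<i>" unfolding \<zeta>_def by (rule zeta_p[OF p0])
  have z0: "\<zeta> \<noteq> 0" unfolding \<zeta>_def by simp
  have "\<zeta> ^ (4 * p) = (\<zeta> ^ p) ^ 4" by (simp only: mult.commute[of 4 p] power_mult)
  then have z4p: "\<zeta> ^ (4 * p) = 1" using zp by simp
  have "\<i> ^ m = - \<i>"
  proof -
    have "\<i> ^ m = \<zeta> ^ (p * m)" by (simp only: power_mult zp)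
    also have "\<dots> = w ^ p" by (simp only: wm power_mult[symmetric] mult.commute)
    finally show ?thesis using wp by simp
  qed
  then have m3: "m mod 4 = 3" using i_pow_cases[of m] by (auto simp: complex_eq_iff)
  then have modd: "odd m" by presburger
  have wa: "\<alpha> * (w - 1) = \<i> * (w + 1)"
    unfolding w_def using ai by (simp add: field_simps)
  have pm: "\<not> p dvd m"
  proof
    assume "p dvd m"
    then obtain t where t: "m = p * t" by (elim dvdE)
    have wt: "w = \<i> ^ t" unfolding wm t by (simp add: power_mult zp)
    have "\<exists>r. \<alpha> = of_rat r"
    proof -
      from i_pow_cases[of t] consider "w = 1" | "w = \<i>" | "w = -1" | "w = - \<i>" using wt by auto
      then show ?thesis
      proof cases
        case 1 then show ?thesis using w1 by simp
      next
        case 2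
        have "\<alpha> * (\<i> - 1) = 1 * (\<i> - 1)" using wa 2 by (simp add: algebra_simps)
        then have "\<alpha> = 1" by (subst (asm) mult_cancel_right) (simp add: complex_eq_iff)
        then show ?thesis by (intro exI[of _ 1]) simp
      next
        case 3
        have "\<alpha> * (-2) = 0" using wa 3 by (simp add: algebra_simps)
        then have "\<alpha> = 0" by simp
        then show ?thesis by (intro exI[of _ 0]) simp
      next
        case 4
        have "\<alpha> * (- \<i> - 1) = (-1) * (- \<i> - 1)" using wa 4 by (simp add: algebra_simps)
        then have "\<alpha> = -1" by (subst (asm) mult_cancel_right) (simp add: complex_eq_iff)
        then show ?thesis by (intro exI[of _ "-1"]) simp
      qed
    qed
    then show False using notrat by blast
  qed
  have cop: "coprime m (4 * p)"
  proof -
    have "coprime p m" using pr pm by (simp add: prime_imp_coprime)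
    then have cp: "coprime m p" by (simp add: ac_simps)
    have c2: "coprime m 2" using modd by simp
    have c4: "coprime m 4" using coprime_mult_right_iff[of m 2 2] c2 by simp
    show ?thesis using c4 cp by (simp add: coprime_mult_right_iff)
  qed
  have m0: "m \<noteq> 0" using modd by presburger
  obtain x y where xy: "m * x = 4 * p * y + gcd m (4 * p)" using bezout_nat[OF m0] by blast
  have xy1: "m * x = 4 * p * y + 1" using xy cop by simp
  have wx: "w ^ x = \<zeta>"
  proof -
    have "w ^ x = \<zeta> ^ (m * x)" unfolding wm by (simp add: power_mult)
    also have "\<dots> = (\<zeta> ^ (4 * p)) ^ y * \<zeta>" unfolding xy1 by (simp add: power_add power_mult)
    finally show ?thesis using z4p by simp
  qed
  have K1: "subfield_C (Qadj {\<alpha>})" by (rule subfield_Qadj)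
  have aK: "\<alpha> \<in> Qadj {\<alpha>}" using Qadj_sub by blast
  have winv: "w + inverse w = (\<alpha> * \<alpha> + \<alpha> * \<alpha> - 1 - 1) / (\<alpha> * \<alpha> + 1)"
  proof -
    have "\<alpha> * \<alpha> + 1 = (\<alpha> + \<i>) * (\<alpha> - \<i>)" by (simp add: algebra_simps)
    then show ?thesis unfolding w_def using ai ai2 by (simp add: field_simps)
  qed
  have "w + inverse w \<in> Qadj {\<alpha>}"
    unfolding winv using aK
    by (intro sf_divide[OF K1] sf_add[OF K1] sf_diff[OF K1] sf_mult[OF K1] sf_1[OF K1])
  then have "w ^ x + inverse w ^ x \<in> Qadj {\<alpha>}" by (rule sf_chebyshev[OF K1 w0])
  then have bK: "\<zeta> + inverse \<zeta> \<in> Qadj {\<alpha>}" using wx by (simp add: power_inverse)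
  have K2: "subfield_C (Qadj {\<zeta> + inverse \<zeta>})" by (rule subfield_Qadj)
  have cK: "\<zeta> ^ k + inverse \<zeta> ^ k \<in> Qadj {\<zeta> + inverse \<zeta>}" for k
    using Qadj_sub[of "{\<zeta> + inverse \<zeta>}"] by (intro sf_chebyshev[OF K2 z0]) auto
  define v where "v = inverse w"
  have wv: "w * v = 1" unfolding v_def using w0 by simp
  have v1: "v \<noteq> 1" using wv w1 by auto
  have zmv: "inverse \<zeta> ^ m = v" unfolding v_def wm by (simp add: power_inverse)
  have zpv: "inverse \<zeta> ^ p = - \<i>" using zp by (simp add: power_inverse)
  have cpm: "\<zeta> ^ (p + m) + inverse \<zeta> ^ (p + m) = \<i> * w - \<i> * v"
    unfolding power_add zp zpv zmv wm[symmetric] by simp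
  have cm: "\<zeta> ^ m + inverse \<zeta> ^ m = w + v" unfolding zmv wm[symmetric] ..
  have den: "1 + 1 - (w + v) \<noteq> 0"
  proof -
    have "1 + 1 - (w + v) = (w - 1) * (v - 1)" using wv by (simp add: algebra_simps)
    then show ?thesis using w1 v1 by simp
  qed
  have "\<alpha> * (w - 1) * (1 - v) = \<i> * (w + 1) * (1 - v)" using wa by simp
  then have "\<alpha> * (1 + 1 - (w + v)) = - (\<i> * w - \<i> * v)"
    using wv by (simp add: algebra_simps)
  then have aexpr: "\<alpha> = - (\<zeta> ^ (p + m) + inverse \<zeta> ^ (p + m)) / (1 + 1 - (\<zeta> ^ m + inverse \<zeta> ^ m))"
    unfolding cpm cm using den by (simp add: field_simps)
  have aK2: "\<alpha> \<in> Qadj {\<zeta> + inverse \<zeta>}"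
    unfolding aexpr
    by (intro sf_divide[OF K2] sf_uminus[OF K2] sf_diff[OF K2] sf_add[OF K2] sf_1[OF K2] cK)
  have eq: "Qadj {\<alpha>} = Qadj {\<zeta> + inverse \<zeta>}"
    using Qadj_elem[OF aK2] Qadj_elem[OF bK] by blast
  have "\<zeta> ^ 4 + inverse (\<zeta> ^ 4) \<in> Qadj {\<zeta> + inverse \<zeta>}"
    using cK[of 4] by (simp add: power_inverse)
  then have sub: "Qadj {\<zeta> ^ 4 + inverse (\<zeta> ^ 4)} \<subseteq> Qadj {\<alpha>}"
    using Qadj_elem eq by blast
  show ?thesis using eq deg sub by blast
qed

end
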